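(* Let $k\ge1$ be odd, $\omega=i\sqrt2$, and with $S=\begin{psmallmatrix}0&-1\\1&0\end{psmallmatrix}$, $T=\begin{psmallmatrix}1&1\\0&1\end{psmallmatrix}$, $T_\omega=\begin{psmallmatrix}1&\omega\\0&1\end{psmallmatrix}$, $U=TS$, let $W_{k,k}=\ker(\mathbf{1}+S)\cap\ker(\mathbf{1}+U+U^2)\cap\ker(\mathbf{1}+ST_\omega+T_\omega S+T_\omega^{-1}ST_\omega S)$. Let $\varepsilon=\begin{psmallmatrix}-1&0\\0&1\end{psmallmatrix}$, so $P|\varepsilon=P(-z,-\bar z)$. Then $W_{k,k}|\varepsilon=W_{k,k}$, and hence $W_{k,k}=W_{k,k}^1\oplus W_{k,k}^{-1}$, where $W_{k,k}^{\pm1}=W_{k,k}\cap\{P\in V_{k,k}:P(-z,-\bar z)=\pm P(z,\bar z)\}$.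
   Context: $V_{k,k}$: polynomials $\sum_{0\le i,j\le k}c_{ij}z^i\bar z^j$ over $\mathbb{C}$ with right action $(P|\gamma)(z,\bar z)=(cz+e)^k\overline{(cz+e)}^kP\!\left(\frac{az+b}{cz+e},\frac{\bar a\bar z+\bar b}{\bar c\bar z+\bar e}\right)$ for $\gamma=\begin{psmallmatrix}a&b\\c&e\end{psmallmatrix}$, extended linearly; $\ker(X)=\{P:P|X=0\}$; $W|\varepsilon=\{P|\varepsilon:P\in W\}$. *)

theory Defs
  imports Complex_Main
begin

text \<open>2x2 complex matrices (a,b,c,e) standing for [[a,b],[c,e]].\<close>
type_synonym mat2 = "complex \<times> complex \<times> complex \<times> complex"

fun mmul :: "mat2 \<Rightarrow> mat2 \<Rightarrow> mat2" where
  "mmul (a,b,c,d) (a',b',c',d') = (a*a'+b*c', a*b'+b*d', c*a'+d*c', c*b'+d*d')"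

fun minv :: "mat2 \<Rightarrow> mat2" where
  "minv (a,b,c,d) = (let D = a*d - b*c in (d/D, -b/D, -c/D, a/D))"

definition mId :: mat2 where "mId = (1,0,0,1)"
definition mS :: mat2 where "mS = (0,-1,1,0)"
definition mT :: mat2 where "mT = (1,1,0,1)"
definition omega :: complex where "omega = \<i> * complex_of_real (sqrt 2)"
definition mTw :: mat2 where "mTw = (1,omega,0,1)"
definition mU :: mat2 where "mU = mmul mT mS"
definition meps :: mat2 where "meps = (-1,0,0,1)"

text \<open>Polynomials in z and conj z of bidegree at most (k,k), viewed as functions on the
  complex plane (this identification is injective).\<close>
definition pev :: "nat \<Rightarrow> (nat \<Rightarrow> nat \<Rightarrow> complex) \<Rightarrow> complex \<Rightarrow> complex" where
  "pev k c = (\<lambda>z. \<Sum>i\<le>k. \<Sum>j\<le>k. c i j * z ^ i * cnj z ^ j)"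

definition Vkk :: "nat \<Rightarrow> (complex \<Rightarrow> complex) set" where
  "Vkk k = {P. \<exists>c. P = pev k c}"

definition coeffs_of :: "nat \<Rightarrow> (complex \<Rightarrow> complex) \<Rightarrow> nat \<Rightarrow> nat \<Rightarrow> complex" where
  "coeffs_of k P = (SOME c. P = pev k c)"

text \<open>(P|gamma)(z,zbar) = (cz+e)^k conj(cz+e)^k P((az+b)/(cz+e), conj of that),
  written out as the polynomial obtained by clearing denominators.\<close>
fun slash :: "nat \<Rightarrow> mat2 \<Rightarrow> (complex \<Rightarrow> complex) \<Rightarrow> complex \<Rightarrow> complex" where
  "slash k (a,b,c,e) P = (\<lambda>z. \<Sum>i\<le>k. \<Sum>j\<le>k. coeffs_of k P i j *
      ((a*z+b) ^ i * (c*z+e) ^ (k-i)) * cnj ((a*z+b) ^ j * (c*z+e) ^ (k-j)))"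

text \<open>Elements of the group ring: finite lists of (coefficient, matrix); the action is extended linearly.\<close>
definition slashX :: "nat \<Rightarrow> (complex \<times> mat2) list \<Rightarrow> (complex \<Rightarrow> complex) \<Rightarrow> complex \<Rightarrow> complex" where
  "slashX k X P = (\<lambda>z. \<Sum>(n,g)\<leftarrow>X. n * slash k g P z)"

definition kerX :: "nat \<Rightarrow> (complex \<times> mat2) list \<Rightarrow> (complex \<Rightarrow> complex) set" where
  "kerX k X = {P \<in> Vkk k. slashX k X P = (\<lambda>_. 0)}"

definition Wkk :: "nat \<Rightarrow> (complex \<Rightarrow> complex) set" where
  "Wkk k = kerX k [(1, mId), (1, mS)]
         \<inter> kerX k [(1, mId), (1, mU), (1, mmul mU mU)]
         \<inter> kerX k [(1, mId), (1, mmul mS mTw), (1, mmul mTw mS),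
                   (1, mmul (mmul (mmul (minv mTw) mS) mTw) mS)]"

definition Wkk_sign :: "nat \<Rightarrow> complex \<Rightarrow> (complex \<Rightarrow> complex) set" where
  "Wkk_sign k s = Wkk k \<inter> {P \<in> Vkk k. \<forall>z. P (-z) = s * P z}"

end

theory Submission
  imports Defs
begin



lemma ev_fin: assumes "finite (F::complex set)" shows "eventually (\<lambda>w. w \<notin> F) (at x)"
proof -
  have o: "open (- (F - {x}))" by (rule open_Compl, rule finite_imp_closed) (simp add: assms)
  show ?thesis unfolding eventually_at_topological
    by (rule exI[of _ "- (F - {x})"]) (use o in auto)
qed

lemma dense_eq:
  fixes f g :: "complex \<Rightarrow> complex"
  assumes "continuous_on UNIV f" "continuous_on UNIV g" "finite F" "\<And>z. z \<notin> F \<Longrightarrow> f z = g z"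
  shows "f = g"
proof
  fix x
  have e: "eventually (\<lambda>w. w \<notin> F) (at x)" using ev_fin assms(3) by blast
  have "(f \<longlongrightarrow> f x) (at x)" using assms(1) by (meson UNIV_I continuous_on_def continuous_on_eq_continuous_at isContD open_UNIV)
  moreover have "(g \<longlongrightarrow> g x) (at x)" using assms(2) by (meson UNIV_I continuous_on_def continuous_on_eq_continuous_at isContD open_UNIV)
  ultimately have "(f \<longlongrightarrow> g x) (at x)" using e assms(4)
    by (smt (verit, best) eventually_mono tendsto_cong)
  then show "f x = g x" using \<open>(f \<longlongrightarrow> f x) (at x)\<close> tendsto_unique by (metis at_neq_bot)
qed

definition N :: "nat \<Rightarrow> complex \<Rightarrow> complex" where "N k x = (x * cnj x) ^ k"

lemma N_mult: "N k (x * y) = N k x * N k y" by (simp add: N_def power_mult_distrib mult_ac)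
lemma N_div: "N k (x / y) = N k x / N k y" by (simp add: N_def power_divide)
lemma N_minus: "N k (- x) = N k x" by (simp add: N_def)
lemma N_one: "N k 1 = 1" by (simp add: N_def)
lemma N_nz: "x \<noteq> 0 \<Longrightarrow> N k x \<noteq> 0" by (simp add: N_def)

lemma Vkk_pev: assumes "P \<in> Vkk k" shows "P = pev k (coeffs_of k P)"
proof -
  from assms have "\<exists>c. P = pev k c" by (simp add: Vkk_def)
  then show ?thesis unfolding coeffs_of_def by (rule someI_ex)
qed

lemma L1:
  assumes "P \<in> Vkk k" "c*z+e \<noteq> 0"
  shows "slash k (a,b,c,e) P z = N k (c*z+e) * P ((a*z+b)/(c*z+e))"
proof -
  define C where "C = coeffs_of k P"
  define x where "x = c*z+e"
  define w where "w = (a*z+b)/(c*z+e)"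
  have P: "P = pev k C" using Vkk_pev[OF assms(1)] C_def by simp
  have wx: "a*z+b = w*x" using assms(2) by (simp add: w_def x_def)
  have t: "(a*z+b)^i * x^(k-i) = x^k * w^i" if "i \<le> k" for i
  proof -
    have "(a*z+b)^i * x^(k-i) = w^i * (x^i * x^(k-i))" by (simp add: wx power_mult_distrib)
    also have "x^i * x^(k-i) = x^k" using that by (simp add: power_add[symmetric])
    finally show ?thesis by simp
  qed
  have Nx: "N k x = x^k * cnj (x^k)" by (simp add: N_def power_mult_distrib)
  have "N k x * P w = (\<Sum>i\<le>k. \<Sum>j\<le>k. C i j * (x^k * w^i) * cnj (x^k * w^j))"
    unfolding P pev_def Nx sum_distrib_left
    by (intro sum.cong refl) (simp add: mult_ac)
  also have "\<dots> = slash k (a,b,c,e) P z"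
    unfolding slash.simps C_def[symmetric] x_def[symmetric]
    by (intro sum.cong refl) (simp add: t)
  finally show ?thesis by (simp add: x_def w_def)
qed

lemma cont_pev: "continuous_on UNIV (pev k c)"
  unfolding pev_def by (intro continuous_intros)

lemma cont_Vkk: "P \<in> Vkk k \<Longrightarrow> continuous_on UNIV P"
  using Vkk_def cont_pev by auto

lemma cont_slash: "continuous_on UNIV (slash k g P)"
  by (cases g) (simp, intro continuous_intros)

lemma cont_slashX: "continuous_on UNIV (slashX k X P)"
proof (induction X)
  case Nil then show ?case by (simp add: slashX_def)
next
  case (Cons p X)
  obtain n g where p: "p = (n,g)" by (cases p)
  have "slashX k (p#X) P = (\<lambda>z. n * slash k g P z + slashX k X P z)"
    by (simp add: slashX_def p)
  then show ?case using Cons cont_slash by (simp add: continuous_intros)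
qed

lemma fin_row: assumes "(c,e) \<noteq> (0::complex,0)" shows "finite {z. c*z+e = 0}"
proof (cases "c = 0")
  case True then show ?thesis using assms by simp
next
  case False
  have "c*z+e = 0 \<Longrightarrow> z = -e/c" for z using False by (metis add_eq_0_iff2 nonzero_mult_div_cancel_left minus_divide_left)
  then have "{z. c*z+e = 0} \<subseteq> {-e/c}" by auto
  then show ?thesis by (rule finite_subset) simp
qed



lemma slash_unique:
  assumes "P \<in> Vkk k" "(c,e) \<noteq> (0,0)" "continuous_on UNIV G"
    "\<And>z. c*z+e \<noteq> 0 \<Longrightarrow> G z = N k (c*z+e) * P ((a*z+b)/(c*z+e))"
  shows "slash k (a,b,c,e) P = G"
  by (rule dense_eq[OF cont_slash assms(3) fin_row[OF assms(2)]]) (use assms L1 in auto)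

lemma Vkk_lin: assumes "P \<in> Vkk k" "Q \<in> Vkk k" shows "(\<lambda>z. P z + s * Q z) \<in> Vkk k"
proof -
  obtain c d where "P = pev k c" "Q = pev k d" using assms by (auto simp: Vkk_def)
  then have "(\<lambda>z. P z + s * Q z) = pev k (\<lambda>i j. c i j + s * d i j)"
    by (auto simp: pev_def algebra_simps sum.distrib sum_distrib_left)
  then show ?thesis by (auto simp: Vkk_def)
qed

lemma Vkk_neg: assumes "P \<in> Vkk k" shows "(\<lambda>z. P (- z)) \<in> Vkk k"
proof -
  obtain c where "P = pev k c" using assms by (auto simp: Vkk_def)
  have "P (- z) = pev k (\<lambda>i j. (-1)^(i+j) * c i j) z" for z
    unfolding \<open>P = pev k c\<close> pev_def
    by (intro sum.cong refl) (simp add: power_add power_minus[of z] power_minus[of "cnj z"])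
  then have "(\<lambda>z. P (- z)) = pev k (\<lambda>i j. (-1)^(i+j) * c i j)" by auto
  then show ?thesis by (auto simp: Vkk_def)
qed

lemma slash_lin:
  assumes "P \<in> Vkk k" "Q \<in> Vkk k" "(c,e) \<noteq> (0,0)"
  shows "slash k (a,b,c,e) (\<lambda>z. P z + s * Q z) = (\<lambda>z. slash k (a,b,c,e) P z + s * slash k (a,b,c,e) Q z)"
  apply (rule slash_unique[OF Vkk_lin[OF assms(1,2)] assms(3)])
  apply (rule continuous_on_add[OF cont_slash continuous_on_mult[OF continuous_on_const cont_slash]])
  subgoal for z using assms L1[OF assms(1), of c z e a b] L1[OF assms(2), of c z e a b]
    by (simp add: algebra_simps del: slash.simps)
  done

definition rowok :: "mat2 \<Rightarrow> bool" where "rowok g = (case g of (a,b,c,e) \<Rightarrow> (c,e) \<noteq> (0,0))"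

lemma slashX_lin:
  assumes "P \<in> Vkk k" "Q \<in> Vkk k" "\<forall>p\<in>set X. rowok (snd p)"
  shows "slashX k X (\<lambda>z. P z + s * Q z) = (\<lambda>z. slashX k X P z + s * slashX k X Q z)"
  using assms(3)
proof (induction X)
  case Nil then show ?case by (simp add: slashX_def)
next
  case (Cons p X)
  obtain n a b c e where p: "p = (n,(a,b,c,e))" by (cases p) auto
  have r: "(c,e) \<noteq> (0,0)" using Cons.prems p by (simp add: rowok_def)
  have IH: "slashX k X (\<lambda>z. P z + s * Q z) = (\<lambda>z. slashX k X P z + s * slashX k X Q z)"
    using Cons by simp
  have e: "slashX k (p#X) R = (\<lambda>z. n * slash k (a,b,c,e) R z + slashX k X R z)" for R
    by (simp add: slashX_def p)
  show ?case unfolding e IH slash_lin[OF assms(1,2) r] by (simp add: algebra_simps)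
qed

lemma kerX_lin:
  assumes "P \<in> kerX k X" "Q \<in> kerX k X" "\<forall>p\<in>set X. rowok (snd p)"
  shows "(\<lambda>z. P z + s * Q z) \<in> kerX k X"
  using assms by (auto simp: kerX_def slashX_lin Vkk_lin fun_eq_iff)

lemma omega_sq: "omega * omega = -2"
proof -
  have s: "complex_of_real (sqrt 2) * complex_of_real (sqrt 2) = 2"
    by (simp flip: of_real_mult)
  have "omega * omega = (\<i>*\<i>) * (complex_of_real (sqrt 2) * complex_of_real (sqrt 2))"
    unfolding omega_def by (simp only: mult_ac)
  then show ?thesis using s by simp
qed

lemma omega_nz: "omega \<noteq> 0" by (simp add: omega_def)

lemma mats:
  "mId = (1,0,0,1)" "mS = (0,-1,1,0)" "mU = (1,-1,1,0)" "mmul mU mU = (0,-1,1,-1)"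
  "mmul mS mTw = (0,-1,1,omega)" "mmul mTw mS = (omega,-1,1,0)"
  "mmul (mmul (mmul (minv mTw) mS) mTw) mS = (1,omega,omega,-1)"
  by (simp_all add: mId_def mS_def mU_def mT_def mTw_def omega_sq)

lemma slash_meps: assumes "P \<in> Vkk k" shows "slash k meps P = (\<lambda>z. P (- z))"
  unfolding meps_def
  apply (rule slash_unique[OF assms])
    apply simp
   apply (rule cont_Vkk[OF Vkk_neg[OF assms]])
  apply (simp add: N_one del: slash.simps)
  done




lemma slashX2: "slashX k [(1,g1),(1,g2)] P z = slash k g1 P z + slash k g2 P z"
  by (simp add: slashX_def)
lemma slashX3: "slashX k [(1,g1),(1,g2),(1,g3)] P z = slash k g1 P z + slash k g2 P z + slash k g3 P z"
  by (simp add: slashX_def)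
lemma slashX4: "slashX k [(1,g1),(1,g2),(1,g3),(1,g4)] P z = slash k g1 P z + slash k g2 P z + slash k g3 P z + slash k g4 P z"
  by (simp add: slashX_def)

lemma kerX_pt: "P \<in> kerX k X \<Longrightarrow> slashX k X P z = 0"
  by (simp add: kerX_def)

lemma kS_pt:
  assumes "P \<in> kerX k [(1,mId),(1,mS)]" "z \<noteq> 0"
  shows "P z + N k z * P (-1/z) = 0"
proof -
  have V: "P \<in> Vkk k" using assms by (simp add: kerX_def)
  have "slashX k [(1,mId),(1,mS)] P z = 0" using kerX_pt[OF assms(1)] .
  then show ?thesis unfolding slashX2 mats
    using L1[OF V, of 0 z 1 1 0] L1[OF V, of 1 z 0 0 "-1"] assms(2)
    by (simp add: N_one del: slash.simps)
qed

lemma kU_pt: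
  assumes "P \<in> kerX k [(1,mId),(1,mU),(1,mmul mU mU)]" "z \<noteq> 0" "z \<noteq> 1"
  shows "P z + N k z * P ((z-1)/z) + N k (z-1) * P (-1/(z-1)) = 0"
proof -
  have V: "P \<in> Vkk k" using assms by (simp add: kerX_def)
  have "slashX k [(1,mId),(1,mU),(1,mmul mU mU)] P z = 0" using kerX_pt[OF assms(1)] .
  then show ?thesis unfolding slashX3 mats
    using L1[OF V, of 0 z 1 1 0] L1[OF V, of 1 z 0 1 "-1"] L1[OF V, of 1 z "-1" 0 "-1"] assms(2,3)
    by (simp add: N_one del: slash.simps)
qed

lemma kW_pt:
  assumes "P \<in> kerX k [(1, mId), (1, mmul mS mTw), (1, mmul mTw mS),
                   (1, mmul (mmul (mmul (minv mTw) mS) mTw) mS)]"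
    "z \<noteq> 0" "z + omega \<noteq> 0" "omega * z - 1 \<noteq> 0"
  shows "P z + N k (z+omega) * P (-1/(z+omega)) + N k z * P ((omega*z-1)/z)
     + N k (omega*z-1) * P ((z+omega)/(omega*z-1)) = 0"
proof -
  have V: "P \<in> Vkk k" using assms by (simp add: kerX_def)
  have "slashX k [(1, mId), (1, mmul mS mTw), (1, mmul mTw mS),
                   (1, mmul (mmul (mmul (minv mTw) mS) mTw) mS)] P z = 0" using kerX_pt[OF assms(1)] .
  then show ?thesis unfolding slashX4 mats(5,6,7) unfolding mats(1)
    using L1[OF V, of 0 z 1 1 0] L1[OF V, of 1 z omega 0 "-1"] L1[OF V, of 1 z 0 omega "-1"]
       L1[OF V, of omega z "-1" 1 omega] assms(2-4)
    by (simp add: N_one add.commute del: slash.simps)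
qed




lemma ker_from_pt:
  assumes "Q \<in> Vkk k" "finite F" "\<And>z. z \<notin> F \<Longrightarrow> slashX k X Q z = 0"
  shows "Q \<in> kerX k X"
proof -
  have "slashX k X Q = (\<lambda>_. 0)"
    by (rule dense_eq[OF cont_slashX _ assms(2)]) (use assms(3) in auto)
  then show ?thesis using assms(1) by (simp add: kerX_def)
qed

lemma negS:
  assumes "P \<in> kerX k [(1,mId),(1,mS)]"
  shows "(\<lambda>z. P (- z)) \<in> kerX k [(1,mId),(1,mS)]"
proof -
  have V: "P \<in> Vkk k" using assms by (simp add: kerX_def)
  note VQ = Vkk_neg[OF V]
  show ?thesis
  proof (rule ker_from_pt[OF VQ, of "{0}"])
    fix z :: complex assume "z \<notin> {0}"
    then have z: "z \<noteq> 0" by simp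
    have a: "P (-z) + N k (-z) * P (-1/(-z)) = 0" using kS_pt[OF assms, of "-z"] z by simp
    show "slashX k [(1,mId),(1,mS)] (\<lambda>z. P (- z)) z = 0" unfolding slashX2 mats
      using L1[OF VQ, of 0 z 1 1 0] L1[OF VQ, of 1 z 0 0 "-1"] z a
      by (simp add: N_one N_minus del: slash.simps)
  qed simp
qed

lemma negU:
  assumes "P \<in> kerX k [(1,mId),(1,mS)]" "P \<in> kerX k [(1,mId),(1,mU),(1,mmul mU mU)]"
  shows "(\<lambda>z. P (- z)) \<in> kerX k [(1,mId),(1,mU),(1,mmul mU mU)]"
proof -
  have V: "P \<in> Vkk k" using assms by (simp add: kerX_def)
  note VQ = Vkk_neg[OF V]
  show ?thesis
  proof (rule ker_from_pt[OF VQ, of "{0,1}"])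
    fix z :: complex assume "z \<notin> {0,1}"
    then have z: "z \<noteq> 0" "z \<noteq> 1" by auto
    then have z1: "z - 1 \<noteq> 0" "1 - z \<noteq> 0" by auto
    have g: "slashX k [(1,mId),(1,mU),(1,mmul mU mU)] (\<lambda>z. P (- z)) z
       = P (-z) + N k z * P (-((z-1)/z)) + N k (z-1) * P (1/(z-1))"
      unfolding slashX3 mats
      using L1[OF VQ, of 0 z 1 1 0] L1[OF VQ, of 1 z 0 1 "-1"] L1[OF VQ, of 1 z "-1" 0 "-1"] z
      by (simp add: N_one del: slash.simps)
    have e1: "-1/(-z) = 1/z" by simp
    have e2: "-1/(-((z-1)/z)) = z/(z-1)" using z z1 by (simp add: field_simps)
    have e3: "-1/(1/(z-1)) = 1-z" using z1 by (simp add: field_simps)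
    have e4: "((1-z)-1)/(1-z) = z/(z-1)" using z1 by (simp add: field_simps)
    have e5: "-1/((1-z)-1) = 1/z" using z by (simp add: field_simps)
    have a1: "P (-z) = - N k z * P (1/z)"
      using kS_pt[OF assms(1), of "-z"] z unfolding e1 N_minus by (simp add: eq_neg_iff_add_eq_0)
    have a2: "P (-((z-1)/z)) = - N k ((z-1)/z) * P (z/(z-1))"
      using kS_pt[OF assms(1), of "-((z-1)/z)"] z z1 unfolding e2 N_minus by (simp add: eq_neg_iff_add_eq_0)
    have a3: "P (1/(z-1)) = - N k (1/(z-1)) * P (1-z)"
      using kS_pt[OF assms(1), of "1/(z-1)"] z z1 unfolding e3 by (simp add: eq_neg_iff_add_eq_0)
    have b: "P (1-z) + N k (z-1) * P (z/(z-1)) + N k z * P (1/z) = 0"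
      using kU_pt[OF assms(2), of "1-z"] z z1 unfolding e4 e5 N_minus[of k "1-z", symmetric] N_minus[of k z, symmetric]
      by simp
    have n1: "N k z * N k ((z-1)/z) = N k (z-1)" using z by (simp add: N_div N_nz)
    have n2: "N k (z-1) * N k (1/(z-1)) = 1" using z1 by (simp add: N_div N_nz N_one)
    have "P (-z) + N k z * P (-((z-1)/z)) + N k (z-1) * P (1/(z-1))
       = - (N k z * P (1/z) + (N k z * N k ((z-1)/z)) * P (z/(z-1)) + (N k (z-1) * N k (1/(z-1))) * P (1-z))"
      unfolding a1 a2 a3 by (simp add: algebra_simps)
    also have "\<dots> = 0" unfolding n1 n2 using b by (simp add: algebra_simps)
    finally show "slashX k [(1,mId),(1,mU),(1,mmul mU mU)] (\<lambda>z. P (- z)) z = 0" using g by simp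
  qed simp
qed


lemma omega_sq2: "omega ^ 2 = -2" using omega_sq by (simp add: power2_eq_square)

lemma negW:
  assumes "P \<in> kerX k [(1,mId),(1,mS)]"
    "P \<in> kerX k [(1, mId), (1, mmul mS mTw), (1, mmul mTw mS),
                   (1, mmul (mmul (mmul (minv mTw) mS) mTw) mS)]"
  shows "(\<lambda>z. P (- z)) \<in> kerX k [(1, mId), (1, mmul mS mTw), (1, mmul mTw mS),
                   (1, mmul (mmul (mmul (minv mTw) mS) mTw) mS)]"
proof -
  have V: "P \<in> Vkk k" using assms by (simp add: kerX_def)
  note VQ = Vkk_neg[OF V]
  show ?thesis
  proof (rule ker_from_pt[OF VQ, of "{0, -omega, 1/omega}"])
    fix z :: complex assume "z \<notin> {0, -omega, 1/omega}"
    then have z0: "z \<noteq> 0" "z \<noteq> -omega" "z \<noteq> 1/omega" by auto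
    have zb: "z + omega \<noteq> 0" using z0(2) by (metis add_eq_0_iff2)
    have zc: "omega * z - 1 \<noteq> 0"
    proof
      assume "omega * z - 1 = 0"
      then have "omega * z = 1" by simp
      then have "z = 1/omega" using omega_nz by (metis nonzero_mult_div_cancel_left)
      then show False using z0(3) by simp
    qed
    note z = z0(1) zb zc
    have z1a: "1 - omega * z \<noteq> 0" using zc by (metis eq_iff_diff_eq_0)
    have z1b: "-(z+omega) \<noteq> 0" using zb by (metis neg_equal_0_iff_equal)
    note z1 = z1a z1b
    have g: "slashX k [(1, mId), (1, mmul mS mTw), (1, mmul mTw mS),
                   (1, mmul (mmul (mmul (minv mTw) mS) mTw) mS)] (\<lambda>z. P (- z)) z
       = P (-z) + N k (z+omega) * P (1/(z+omega)) + N k z * P (-((omega*z-1)/z))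
         + N k (omega*z-1) * P (-((z+omega)/(omega*z-1)))"
      unfolding slashX4 mats(5,6,7) unfolding mats(1)
      using L1[OF VQ, of 0 z 1 1 0] L1[OF VQ, of 1 z omega 0 "-1"] L1[OF VQ, of 1 z 0 omega "-1"]
       L1[OF VQ, of omega z "-1" 1 omega] z
      by (simp add: N_one add.commute del: slash.simps)
    have e1: "-1/(-z) = 1/z" by simp
    have e2: "-1/(1/(z+omega)) = -(z+omega)" using z by (simp add: field_simps)
    have e3: "-1/(-((omega*z-1)/z)) = z/(omega*z-1)" using z by (simp add: field_simps)
    have e4: "-1/(-((z+omega)/(omega*z-1))) = (omega*z-1)/(z+omega)" using z by (simp add: field_simps)
    have f1: "-(z+omega) + omega = -z" by simp
    have f2: "omega * -(z+omega) - 1 = 1 - omega * z" using omega_sq by (simp add: algebra_simps)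
    have f3: "(1 - omega * z) / -(z+omega) = (omega*z-1)/(z+omega)" by (metis minus_diff_eq minus_divide_divide)
    have f4: "-z / (1 - omega * z) = z/(omega*z-1)" using z z1 by (simp add: field_simps)
    have a1: "P (-z) = - N k z * P (1/z)"
      using kS_pt[OF assms(1), of "-z"] z unfolding e1 N_minus by (simp add: eq_neg_iff_add_eq_0)
    have a2: "P (1/(z+omega)) = - N k (1/(z+omega)) * P (-(z+omega))"
      using kS_pt[OF assms(1), of "1/(z+omega)"] z unfolding e2 by (simp add: eq_neg_iff_add_eq_0)
    have a3: "P (-((omega*z-1)/z)) = - N k ((omega*z-1)/z) * P (z/(omega*z-1))"
      using kS_pt[OF assms(1), of "-((omega*z-1)/z)"] z unfolding e3 N_minus by (simp add: eq_neg_iff_add_eq_0)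
    have a4: "P (-((z+omega)/(omega*z-1))) = - N k ((z+omega)/(omega*z-1)) * P ((omega*z-1)/(z+omega))"
      using kS_pt[OF assms(1), of "-((z+omega)/(omega*z-1))"] z unfolding e4 N_minus by (simp add: eq_neg_iff_add_eq_0)
    have n0: "N k (1 - omega*z) = N k (omega*z-1)" by (metis N_minus minus_diff_eq)
    have b0: "P (-(z+omega)) + N k (-z) * P (-1/(-z)) + N k (-(z+omega)) * P ((1 - omega * z) / -(z+omega))
      + N k (1 - omega * z) * P (-z / (1 - omega * z)) = 0"
      using kW_pt[OF assms(2), of "-(z+omega)"] z z1 unfolding f1 f2 by simp
    have b: "P (-(z+omega)) + N k z * P (1/z) + N k (z+omega) * P ((omega*z-1)/(z+omega))
      + N k (omega*z-1) * P (z/(omega*z-1)) = 0"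
      using b0 unfolding f3 f4 e1 N_minus n0 by simp
    have n1: "N k (z+omega) * N k (1/(z+omega)) = 1" using z by (simp add: N_div N_nz N_one)
    have n2: "N k z * N k ((omega*z-1)/z) = N k (omega*z-1)" using z by (simp add: N_div N_nz)
    have n3: "N k (omega*z-1) * N k ((z+omega)/(omega*z-1)) = N k (z+omega)" using z by (simp add: N_div N_nz)
    have "P (-z) + N k (z+omega) * P (1/(z+omega)) + N k z * P (-((omega*z-1)/z))
         + N k (omega*z-1) * P (-((z+omega)/(omega*z-1)))
       = - (N k z * P (1/z) + (N k (z+omega) * N k (1/(z+omega))) * P (-(z+omega))
           + (N k z * N k ((omega*z-1)/z)) * P (z/(omega*z-1))
           + (N k (omega*z-1) * N k ((z+omega)/(omega*z-1))) * P ((omega*z-1)/(z+omega)))"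
      unfolding a1 a2 a3 a4 by (simp add: algebra_simps)
    also have "\<dots> = 0" unfolding n1 n2 n3 using b by (simp add: algebra_simps)
    finally show "slashX k [(1, mId), (1, mmul mS mTw), (1, mmul mTw mS),
                   (1, mmul (mmul (mmul (minv mTw) mS) mTw) mS)] (\<lambda>z. P (- z)) z = 0" using g by simp
  qed simp
qed




lemma W_neg: "P \<in> Wkk k \<Longrightarrow> (\<lambda>z. P (- z)) \<in> Wkk k"
  unfolding Wkk_def using negS negU negW by blast

lemma W_V: "P \<in> Wkk k \<Longrightarrow> P \<in> Vkk k"
  by (simp add: Wkk_def kerX_def)

lemma W_lin: assumes "P \<in> Wkk k" "Q \<in> Wkk k" shows "(\<lambda>z. P z + s * Q z) \<in> Wkk k"
proof -
  have r1: "\<forall>p\<in>set [(1::complex, mId), (1, mS)]. rowok (snd p)" by (simp add: mats rowok_def)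
  have r2: "\<forall>p\<in>set [(1::complex, mId), (1, mU), (1, mmul mU mU)]. rowok (snd p)" by (simp add: mats rowok_def)
  have r3: "\<forall>p\<in>set [(1::complex, mId), (1, mmul mS mTw), (1, mmul mTw mS),
                   (1, mmul (mmul (mmul (minv mTw) mS) mTw) mS)]. rowok (snd p)"
    unfolding mats(5,6,7) unfolding mats(1) by (simp add: rowok_def omega_nz)
  show ?thesis using assms kerX_lin[OF _ _ r1] kerX_lin[OF _ _ r2] kerX_lin[OF _ _ r3]
    unfolding Wkk_def by blast
qed

lemma W_scal: assumes "P \<in> Wkk k" shows "(\<lambda>z. c * P z) \<in> Wkk k"
proof -
  have "(\<lambda>z. c * P z) = (\<lambda>z. P z + (c - 1) * P z)" by (auto simp: algebra_simps)
  then show ?thesis using W_lin[OF assms assms] by simp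
qed

theorem proposition5p10:
  fixes k :: nat
  assumes "odd k" and "k \<ge> 1"
  shows "slash k meps ` Wkk k = Wkk k
    \<and> (\<forall>P \<in> Wkk k. \<exists>!gh. fst gh \<in> Wkk_sign k 1 \<and> snd gh \<in> Wkk_sign k (-1)
                       \<and> P = (\<lambda>z. fst gh z + snd gh z))"
proof (intro conjI ballI)
  show "slash k meps ` Wkk k = Wkk k"
  proof
    show "slash k meps ` Wkk k \<subseteq> Wkk k"
      using W_neg by (auto simp: slash_meps W_V)
    show "Wkk k \<subseteq> slash k meps ` Wkk k"
    proof
      fix P assume P: "P \<in> Wkk k"
      have "slash k meps (\<lambda>z. P (- z)) = P"
        using slash_meps[OF W_V[OF W_neg[OF P]]] by simp
      then show "P \<in> slash k meps ` Wkk k" using W_neg[OF P] by (metis image_eqI)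
    qed
  qed
next
  fix P assume P: "P \<in> Wkk k"
  define A where "A = (\<lambda>z. (1/2) * P z)"
  define g where "g = (\<lambda>z. A z + (1/2) * P (- z))"
  define h where "h = (\<lambda>z. A z + (-1/2) * P (- z))"
  have A: "A \<in> Wkk k" unfolding A_def by (rule W_scal[OF P])
  have gW: "g \<in> Wkk k" unfolding g_def by (rule W_lin[OF A W_neg[OF P]])
  have hW: "h \<in> Wkk k" unfolding h_def by (rule W_lin[OF A W_neg[OF P]])
  have gs: "g \<in> Wkk_sign k 1" using gW W_V[OF gW] by (simp add: Wkk_sign_def g_def A_def algebra_simps)
  have hs: "h \<in> Wkk_sign k (-1)" using hW W_V[OF hW] by (simp add: Wkk_sign_def h_def A_def algebra_simps)
  have Pe: "P = (\<lambda>z. g z + h z)" by (auto simp: g_def h_def A_def)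
  show "\<exists>!gh. fst gh \<in> Wkk_sign k 1 \<and> snd gh \<in> Wkk_sign k (-1) \<and> P = (\<lambda>z. fst gh z + snd gh z)"
  proof (rule ex1I[of _ "(g,h)"])
    show "fst (g,h) \<in> Wkk_sign k 1 \<and> snd (g,h) \<in> Wkk_sign k (-1) \<and> P = (\<lambda>z. fst (g,h) z + snd (g,h) z)"
      using gs hs Pe by simp
  next
    fix gh assume H: "fst gh \<in> Wkk_sign k 1 \<and> snd gh \<in> Wkk_sign k (-1) \<and> P = (\<lambda>z. fst gh z + snd gh z)"
    obtain g' h' where gh: "gh = (g',h')" by (cases gh)
    have e1: "g' (-z) = g' z" and e2: "h' (-z) = - h' z" and e3: "P z = g' z + h' z" for z
      using H unfolding gh by (auto simp: Wkk_sign_def)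
    have "g' z = g z \<and> h' z = h z" for z
      using e1[of z] e2[of z] e3[of z] e3[of "-z"] by (simp add: g_def h_def A_def field_simps)
    then show "gh = (g,h)" unfolding gh by (auto simp: fun_eq_iff)
  qed
qed


end
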